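(* Let $d,m\ge1$ be integers, $B\ge0$, $M\in\mathbb N_0$, and $f\in\mathcal F_{d,m,B}$. Let $\tilde L$ be a log-partition estimator, i.e. a map $g\mapsto\tilde L_g\in\mathbb R$, with worst-case error $E\ge0$ on $\mathcal F_{d,m,B}$, i.e. $|\tilde L_g-L_g|\le E$ for all $g\in\mathcal F_{d,m,B}$. Let $\tilde P_f$ be the distribution of the output of the following bisection sampling procedure: for a hyperrectangle $\mathcal Z=\prod_{i=1}^d[z_i,z_i+h_i]$ define $f_{\mathcal Z}:\mathcal X\to\mathbb R$, $f_{\mathcal Z}(x)=f(z_1+h_1x_1,\dots,z_d+h_dx_d)$; set $\mathcal Z\leftarrow\mathcal X$; for $i=1,\dots,M$ and for $j=1,\dots,d$: split $\mathcal Z$ along coordinate $j$ into two equal-sized hyperrectangles $\mathcal Z_1,\mathcal Z_2$, compute $p_1=\sigma(\tilde L_{f_{\mathcal Z_1}}-\tilde L_{f_{\mathcal Z_2}})$ with $\sigma(u)=(1+e^{-u})^{-1}$, and replace $\mathcal Z$ by $\mathcal Z_1$ with probability $p_1$ and by $\mathcal Z_2$ otherwise; finally return a sample from the uniform distribution on $\mathcal Z$. Then \[D_{\sup\text{-}\log}(\tilde P_f,P_f)\le2MdE+2^{-M}d\|f\|_{C^1}.\]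
   Context: $\mathcal X=[0,1]^d$ with Lebesgue measure. For bounded measurable $g$: $Z_g=\int_{\mathcal X}e^g dx$, $L_g=\log Z_g$, $P_g$ the distribution with density $e^g/Z_g$. $\|f\|_{C^m}=\sup_{\alpha\in\mathbb N_0^d,|\alpha|_1\le m}\|\partial^\alpha f\|_\infty$ and $\mathcal F_{d,m,B}=\{f\in C^m(\mathcal X):\|f\|_{C^m}\le B\}$. $D_{\sup\text{-}\log}(P,Q)=\|\log(dP/dQ)\|_\infty$ (essential sup over $\mathcal X$; $\infty$ unless mutually absolutely continuous). *)

theory Defs
  imports "HOL-Probability.Probability"
begin

section \<open>The unit cube X = [0,1]^d, with d = CARD('n)\<close>

definition ucube :: "(real^'n) set" where
  "ucube = {x. \<forall>i. 0 \<le> x$i \<and> x$i \<le> 1}"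

text \<open>Partial derivative along coordinate i, taken within the cube (one-sided at the
boundary).\<close>
definition cube_line :: "real^'n \<Rightarrow> 'n \<Rightarrow> real \<Rightarrow> real^'n" where
  "cube_line x i t = x + t *\<^sub>R axis i 1"

definition partial :: "'n \<Rightarrow> (real^'n \<Rightarrow> real) \<Rightarrow> real^'n \<Rightarrow> real" where
  "partial i g x = vector_derivative (\<lambda>t. g (cube_line x i t))
                      (at 0 within {t. cube_line x i t \<in> ucube})"

text \<open>Iterated partial derivative along a list of directions
 (a multi-index alpha corresponds to any list with alpha_i occurrences of i).\<close>
fun iter_partial :: "'n list \<Rightarrow> (real^'n \<Rightarrow> real) \<Rightarrow> real^'n \<Rightarrow> real" where
  "iter_partial [] g = g"
| "iter_partial (i # is) g = partial i (iter_partial is g)"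

definition is_Cm :: "nat \<Rightarrow> (real^'n \<Rightarrow> real) \<Rightarrow> bool" where
  "is_Cm m g \<longleftrightarrow>
     (\<forall>is. length is \<le> m \<longrightarrow> continuous_on ucube (iter_partial is g)) \<and>
     (\<forall>is. length is < m \<longrightarrow> (\<forall>i. \<forall>x\<in>ucube.
         ((\<lambda>t. iter_partial is g (cube_line x i t)) has_vector_derivative
             partial i (iter_partial is g) x) (at 0 within {t. cube_line x i t \<in> ucube})))"

definition Cnorm :: "nat \<Rightarrow> (real^'n \<Rightarrow> real) \<Rightarrow> real" where
  "Cnorm m g = Sup {\<bar>iter_partial is g x\<bar> | is x. length is \<le> m \<and> x \<in> ucube}"

definition Fclass :: "nat \<Rightarrow> real \<Rightarrow> (real^'n \<Rightarrow> real) set" where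
  "Fclass m B = {g. is_Cm m g \<and> Cnorm m g \<le> B}"

definition Zfun :: "(real^'n \<Rightarrow> real) \<Rightarrow> real" where
  "Zfun g = (LINT x:ucube|lborel. exp (g x))"

definition Lfun :: "(real^'n \<Rightarrow> real) \<Rightarrow> real" where
  "Lfun g = ln (Zfun g)"

definition Pdist :: "(real^'n \<Rightarrow> real) \<Rightarrow> (real^'n) measure" where
  "Pdist g = density lborel (\<lambda>x. ennreal (indicator ucube x * exp (g x) / Zfun g))"

text \<open>D(P,Q) = ess sup |log dP/dQ| (infinite unless P, Q mutually absolutely continuous).
RN_deriv Q P is the density dP/dQ.\<close>
definition D_suplog :: "'a measure \<Rightarrow> 'a measure \<Rightarrow> ereal" where
  "D_suplog P Q =
     (if absolutely_continuous Q P \<and> absolutely_continuous P Q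
      then esssup Q (\<lambda>x. ereal \<bar>ln (enn2real (RN_deriv Q P x))\<bar>)
      else \<infinity>)"

text \<open>A hyperrectangle prod_i [z_i, z_i + h_i] is represented by the pair (z, h).\<close>

definition rect_fun :: "(real^'n \<Rightarrow> real) \<Rightarrow> (real^'n::finite) \<times> (real^'n) \<Rightarrow> real^'n \<Rightarrow> real" where
  "rect_fun f Z x = f (\<chi> i. fst Z $ i + snd Z $ i * x $ i)"

definition sigmoid :: "real \<Rightarrow> real" where
  "sigmoid u = 1 / (1 + exp (- u))"

definition split1 :: "'n \<Rightarrow> (real^'n::finite) \<times> (real^'n) \<Rightarrow> (real^'n::finite) \<times> (real^'n)" where
  "split1 j Z = (fst Z, (\<chi> k. if k = j then snd Z $ k / 2 else snd Z $ k))"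

definition split2 :: "'n \<Rightarrow> (real^'n::finite) \<times> (real^'n) \<Rightarrow> (real^'n::finite) \<times> (real^'n)" where
  "split2 j Z = ((\<chi> k. if k = j then fst Z $ k + snd Z $ k / 2 else fst Z $ k),
                 (\<chi> k. if k = j then snd Z $ k / 2 else snd Z $ k))"

definition bisect_step :: "((real^'n \<Rightarrow> real) \<Rightarrow> real) \<Rightarrow> (real^'n \<Rightarrow> real) \<Rightarrow> 'n
      \<Rightarrow> (real^'n::finite) \<times> (real^'n) \<Rightarrow> ((real^'n::finite) \<times> (real^'n)) pmf" where
  "bisect_step Lt f j Z =
     bind_pmf (bernoulli_pmf
                 (sigmoid (Lt (rect_fun f (split1 j Z)) - Lt (rect_fun f (split2 j Z)))))
              (\<lambda>b. return_pmf (if b then split1 j Z else split2 j Z))"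

fun bisect_run :: "((real^'n \<Rightarrow> real) \<Rightarrow> real) \<Rightarrow> (real^'n \<Rightarrow> real) \<Rightarrow> 'n list
      \<Rightarrow> (real^'n::finite) \<times> (real^'n) \<Rightarrow> ((real^'n::finite) \<times> (real^'n)) pmf" where
  "bisect_run Lt f [] Z = return_pmf Z"
| "bisect_run Lt f (j # js) Z = bind_pmf (bisect_step Lt f j Z) (bisect_run Lt f js)"

definition bisect_schedule :: "(nat \<Rightarrow> 'n) \<Rightarrow> nat \<Rightarrow> 'n list" where
  "bisect_schedule ord M = concat (replicate M (map ord [0..<CARD('n)]))"

definition bisect_sampler ::
  "((real^'n \<Rightarrow> real) \<Rightarrow> real) \<Rightarrow> (nat \<Rightarrow> 'n) \<Rightarrow> nat \<Rightarrow> (real^'n \<Rightarrow> real) \<Rightarrow> (real^'n) measure" where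
  "bisect_sampler Lt ord M f =
     bind (measure_pmf (bisect_run Lt f (bisect_schedule ord M) (0, \<chi> i. 1)))
          (\<lambda>Z. uniform_measure lborel (cbox (fst Z) (fst Z + snd Z)))"

end

theory Submission
  imports Defs
begin

lemma ucube_cbox: "ucube = cbox (0::real^'n) 1"
  by (auto simp: ucube_def mem_box_cart)

lemma Cnorm_ge:
  fixes g :: "real^'n \<Rightarrow> real"
  assumes "is_Cm m g" "length is \<le> m" "x \<in> ucube"
  shows "\<bar>iter_partial is g x\<bar> \<le> Cnorm m g"
proof -
  let ?S = "{\<bar>iter_partial is g x\<bar> | is x. length is \<le> m \<and> x \<in> ucube}"
  have eq: "?S = (\<Union>is\<in>{is. set is \<subseteq> UNIV \<and> length is \<le> m}. (\<lambda>x. \<bar>iter_partial is g x\<bar>) ` ucube)"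
    by auto
  have fin: "finite {is::'n list. set is \<subseteq> UNIV \<and> length is \<le> m}"
    by (rule finite_lists_length_le) simp
  have "bounded ((\<lambda>x. \<bar>iter_partial is g x\<bar>) ` ucube)" if "length is \<le> m" for "is"
  proof -
    have "continuous_on ucube (iter_partial is g)" using assms(1) that by (auto simp: is_Cm_def)
    then have "continuous_on ucube (\<lambda>x. \<bar>iter_partial is g x\<bar>)" by (intro continuous_intros)
    then show ?thesis by (intro compact_imp_bounded compact_continuous_image) (simp_all add: ucube_cbox)
  qed
  then have "bounded ?S" unfolding eq using fin by (intro bounded_UN) auto
  then have "bdd_above ?S" by (rule bounded_imp_bdd_above)
  then show ?thesis unfolding Cnorm_def by (rule cSup_upper[rotated]) (use assms in auto)
qed

lemma is_Cm_mono: "is_Cm m f \<Longrightarrow> k \<le> m \<Longrightarrow> is_Cm k f"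
  unfolding is_Cm_def by (meson le_trans less_le_trans)

lemma cube_line_comp: "cube_line y i t $ k = y $ k + (if k = i then t else 0)"
  by (simp add: cube_line_def axis_def)

lemma line_lip:
  fixes f :: "real^'n \<Rightarrow> real"
  assumes f: "is_Cm m f" "1 \<le> m" and y: "y \<in> ucube" and y': "cube_line y i t \<in> ucube"
  shows "\<bar>f (cube_line y i t) - f y\<bar> \<le> \<bar>t\<bar> * Cnorm 1 f"
proof -
  define S where "S = closed_segment 0 t"
  define \<phi> where "\<phi> = (\<lambda>r. f (cube_line y i r))"
  have inS: "cube_line y i s \<in> ucube" if "s \<in> S" for s
  proof -
    have "(0 \<le> s \<and> s \<le> t) \<or> (t \<le> s \<and> s \<le> 0)" using that by (auto simp: S_def closed_segment_eq_real_ivl split: if_splits)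
    moreover have "0 \<le> y$i" "y$i \<le> 1" using y by (auto simp: ucube_def)
    moreover have "0 \<le> y$i + t" "y$i + t \<le> 1" using y' by (auto simp: ucube_def cube_line_comp dest: spec[of _ i])
    ultimately show ?thesis unfolding ucube_def mem_Collect_eq cube_line_comp
    proof (intro allI)
      fix k
      have "0 \<le> y$k" "y$k \<le> 1" using y by (auto simp: ucube_def)
      then show "0 \<le> y $ k + (if k = i then s else 0) \<and> y $ k + (if k = i then s else 0) \<le> 1"
        using \<open>(0 \<le> s \<and> s \<le> t) \<or> (t \<le> s \<and> s \<le> 0)\<close> \<open>0 \<le> y$i + t\<close> \<open>y$i + t \<le> 1\<close>
        by (cases "k = i") auto
    qed
  qed
  have der: "(\<phi> has_vector_derivative partial i f (cube_line y i s)) (at s within S)" if s: "s \<in> S" for s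
  proof -
    define x where "x = cube_line y i s"
    have "x \<in> ucube" using inS s by (simp add: x_def)
    then have d: "((\<lambda>u. f (cube_line x i u)) has_vector_derivative partial i f x)
                  (at 0 within {u. cube_line x i u \<in> ucube})"
      using f unfolding is_Cm_def by (metis iter_partial.simps(1) list.size(3) less_le_trans zero_less_one)
    have cl: "cube_line x i (r - s) = cube_line y i r" for r
      by (simp add: x_def cube_line_def algebra_simps)
    have d2: "((\<lambda>u. f (cube_line x i u)) has_vector_derivative partial i f x)
                  (at ((\<lambda>r. r - s) s) within (\<lambda>r. r - s) ` S)"
      by (rule has_vector_derivative_within_subset[OF d[unfolded diff_self[symmetric, of s]]]) (use inS cl in auto)
    have d1: "((\<lambda>r. r - s) has_vector_derivative 1) (at s within S)"
      by (auto intro!: derivative_eq_intros)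
    from vector_diff_chain_within[OF d1 d2] show ?thesis
      unfolding o_def cl by (simp add: \<phi>_def x_def)
  qed
  have "norm (\<phi> t - \<phi> 0) \<le> Cnorm 1 f * norm (t - 0)"
  proof (rule differentiable_bound[where f'="\<lambda>s h. h *\<^sub>R partial i f (cube_line y i s)"])
    show "convex S" by (simp add: S_def)
    show "(\<phi> has_derivative (\<lambda>h. h *\<^sub>R partial i f (cube_line y i s))) (at s within S)" if "s \<in> S" for s
      using der[OF that] by (simp add: has_vector_derivative_def)
    show "onorm (\<lambda>h. h *\<^sub>R partial i f (cube_line y i s)) \<le> Cnorm 1 f" if "s \<in> S" for s
    proof -
      have "onorm (\<lambda>h::real. h *\<^sub>R partial i f (cube_line y i s)) = \<bar>partial i f (cube_line y i s)\<bar>"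
        using onorm_scaleR_left[OF bounded_linear_ident, of "partial i f (cube_line y i s)"] by (simp add: onorm_id)
      also have "\<dots> \<le> Cnorm 1 f"
        using Cnorm_ge[OF is_Cm_mono[OF f(1) f(2)], of "[i]" "cube_line y i s"] inS[OF that]
        by simp
      finally show ?thesis .
    qed
    show "t \<in> S" "0 \<in> S" by (auto simp: S_def)
  qed
  moreover have "cube_line y i 0 = y" by (simp add: cube_line_def)
  ultimately show ?thesis by (simp add: \<phi>_def mult.commute)
qed

lemma lip_cube:
  fixes f :: "real^'n \<Rightarrow> real"
  assumes f: "is_Cm m f" "1 \<le> m" and x: "x \<in> ucube" and y: "y \<in> ucube"
  shows "\<bar>f x - f y\<bar> \<le> (\<Sum>i\<in>UNIV. \<bar>x$i - y$i\<bar>) * Cnorm 1 f"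
proof -
  have "\<forall>y\<in>ucube. (\<forall>k. k \<notin> S \<longrightarrow> y$k = x$k) \<longrightarrow> \<bar>f x - f y\<bar> \<le> (\<Sum>i\<in>S. \<bar>x$i - y$i\<bar>) * Cnorm 1 f"
    if "finite S" for S :: "'n set"
    using that
  proof (induction S)
    case empty
    have "y = x" if "\<forall>k. y $ k = x $ k" for y using that by (simp add: vec_eq_iff)
    then show ?case by auto
  next
    case (insert i S)
    show ?case
    proof (intro ballI impI)
      fix y assume y: "y \<in> ucube" and agree: "\<forall>k. k \<notin> insert i S \<longrightarrow> y $ k = x $ k"
      define y' where "y' = cube_line y i (x$i - y$i)"
      have y'c: "y' $ k = (if k = i then x$k else y$k)" for k
        by (simp add: y'_def cube_line_comp)
      have y'u: "y' \<in> ucube" using x y by (auto simp: ucube_def y'c)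
      have a': "\<forall>k. k \<notin> S \<longrightarrow> y' $ k = x $ k" using agree by (auto simp: y'c)
      have h1: "\<bar>f x - f y'\<bar> \<le> (\<Sum>k\<in>S. \<bar>x$k - y'$k\<bar>) * Cnorm 1 f"
        using insert.IH y'u a' by blast
      have "(\<Sum>k\<in>S. \<bar>x$k - y'$k\<bar>) = (\<Sum>k\<in>S. \<bar>x$k - y$k\<bar>)"
        using insert.hyps by (intro sum.cong) (auto simp: y'c)
      with h1 have h1': "\<bar>f x - f y'\<bar> \<le> (\<Sum>k\<in>S. \<bar>x$k - y$k\<bar>) * Cnorm 1 f" by simp
      have h2: "\<bar>f y' - f y\<bar> \<le> \<bar>x$i - y$i\<bar> * Cnorm 1 f"
        using line_lip[OF f y, of i "x$i - y$i"] y'u by (simp add: y'_def)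
      have "\<bar>f x - f y\<bar> \<le> \<bar>f x - f y'\<bar> + \<bar>f y' - f y\<bar>" by simp
      also have "\<dots> \<le> (\<Sum>k\<in>S. \<bar>x$k - y$k\<bar>) * Cnorm 1 f + \<bar>x$i - y$i\<bar> * Cnorm 1 f"
        using h1' h2 by simp
      also have "\<dots> = (\<Sum>k\<in>insert i S. \<bar>x$k - y$k\<bar>) * Cnorm 1 f"
        using insert.hyps by (simp add: algebra_simps)
      finally show "\<bar>f x - f y\<bar> \<le> (\<Sum>k\<in>insert i S. \<bar>x$k - y$k\<bar>) * Cnorm 1 f" .
    qed
  qed
  from this[of UNIV] y show ?thesis by simp
qed


definition valid :: "(real^'n::finite) \<times> (real^'n) \<Rightarrow> bool" where
  "valid Z \<longleftrightarrow> (\<forall>i. 0 \<le> fst Z $ i \<and> 0 < snd Z $ i \<and> fst Z $ i + snd Z $ i \<le> 1)"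

definition tmap :: "(real^'n::finite) \<times> (real^'n) \<Rightarrow> real^'n \<Rightarrow> real^'n" where
  "tmap Z x = (\<chi> i. fst Z $ i + snd Z $ i * x $ i)"

lemma rect_fun_tmap: "rect_fun f Z = (\<lambda>x. f (tmap Z x))"
  by (simp add: rect_fun_def tmap_def fun_eq_iff)

lemma tmap_ucube:
  assumes "valid Z" "x \<in> ucube" shows "tmap Z x \<in> ucube"
proof -
  have "0 \<le> fst Z $ i + snd Z $ i * x $ i \<and> fst Z $ i + snd Z $ i * x $ i \<le> 1" for i
  proof -
    have a: "0 \<le> fst Z $ i" "0 < snd Z $ i" "fst Z $ i + snd Z $ i \<le> 1" using assms(1) by (auto simp: valid_def)
    have b: "0 \<le> x$i" "x$i \<le> 1" using assms(2) by (auto simp: ucube_def)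
    have "snd Z $ i * x $ i \<le> snd Z $ i" using a b by (simp add: mult_left_le)
    moreover have "0 \<le> snd Z $ i * x $ i" using a b by simp
    ultimately show ?thesis using a by linarith
  qed
  then show ?thesis by (simp add: ucube_def tmap_def)
qed

lemma tmap_line: "tmap Z (cube_line x i t) = cube_line (tmap Z x) i (snd Z $ i * t)"
  by (simp add: vec_eq_iff tmap_def cube_line_comp algebra_simps)

lemma line_set: 
  assumes "x \<in> ucube" shows "{t. cube_line x i t \<in> ucube} = {- x$i .. 1 - x$i}"
proof -
  have "cube_line x i t \<in> ucube \<longleftrightarrow> t \<in> {- x$i .. 1 - x$i}" for t
  proof
    assume "cube_line x i t \<in> ucube"
    then show "t \<in> {- x$i .. 1 - x$i}" by (auto simp: ucube_def cube_line_comp dest: spec[of _ i])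
  next
    assume t: "t \<in> {- x$i .. 1 - x$i}"
    show "cube_line x i t \<in> ucube" unfolding ucube_def mem_Collect_eq cube_line_comp
    proof
      fix k
      have "0 \<le> x$k" "x$k \<le> 1" using assms by (auto simp: ucube_def)
      then show "0 \<le> x $ k + (if k = i then t else 0) \<and> x $ k + (if k = i then t else 0) \<le> 1"
        using t by (cases "k = i") auto
    qed
  qed
  then show ?thesis by (intro set_eqI) simp
qed

lemma line_nontriv:
  assumes "x \<in> ucube" shows "at 0 within {t. cube_line x i t \<in> ucube} \<noteq> bot"
proof -
  have "0 \<le> x$i" "x$i \<le> 1" using assms by (auto simp: ucube_def)
  then have "0 islimpt {- x$i .. 1 - x$i}" by (subst islimpt_Icc) auto
  then show ?thesis unfolding line_set[OF assms] trivial_limit_within by blast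
qed

lemma deriv_step:
  fixes g :: "real^'n \<Rightarrow> real"
  assumes v: "valid Z" and g: "is_Cm m g" and len: "length is < m" and x: "x \<in> ucube"
    and eq: "\<And>y. y \<in> ucube \<Longrightarrow> iter_partial is (\<lambda>y. g (tmap Z y)) y = c * iter_partial is g (tmap Z y)"
  shows "((\<lambda>t. iter_partial is (\<lambda>y. g (tmap Z y)) (cube_line x i t)) has_vector_derivative
           (snd Z $ i * c * partial i (iter_partial is g) (tmap Z x))) (at 0 within {t. cube_line x i t \<in> ucube})"
proof -
  define G where "G = iter_partial is g"
  define L where "L = {t. cube_line x i t \<in> ucube}"
  define L' where "L' = {u. cube_line (tmap Z x) i u \<in> ucube}"
  have Tx: "tmap Z x \<in> ucube" using tmap_ucube[OF v x] .
  have d: "((\<lambda>u. G (cube_line (tmap Z x) i u)) has_vector_derivative partial i G (tmap Z x)) (at 0 within L')"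
    using g len Tx unfolding is_Cm_def G_def L'_def by blast
  have sub: "(\<lambda>t. snd Z $ i * t) ` L \<subseteq> L'"
    using tmap_ucube[OF v] by (auto simp: L_def L'_def tmap_line[symmetric])
  have d2: "((\<lambda>u. G (cube_line (tmap Z x) i u)) has_vector_derivative partial i G (tmap Z x))
             (at ((\<lambda>t. snd Z $ i * t) 0) within (\<lambda>t. snd Z $ i * t) ` L)"
    using has_vector_derivative_within_subset[OF d sub] by simp
  have d1: "((\<lambda>t. snd Z $ i * t) has_vector_derivative snd Z $ i) (at 0 within L)"
    by (auto intro!: derivative_eq_intros)
  have d3: "((\<lambda>t. G (cube_line (tmap Z x) i (snd Z $ i * t))) has_vector_derivative
               (snd Z $ i * partial i G (tmap Z x))) (at 0 within L)"
    using vector_diff_chain_within[OF d1 d2] by (simp add: o_def)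
  have d4: "((\<lambda>t. c * G (cube_line (tmap Z x) i (snd Z $ i * t))) has_vector_derivative
               (c * (snd Z $ i * partial i G (tmap Z x)))) (at 0 within L)"
    using d3 unfolding has_real_derivative_iff_has_vector_derivative[symmetric] by (rule DERIV_cmult)
  have "0 \<in> L" using x by (simp add: L_def cube_line_def)
  then have "((\<lambda>t. iter_partial is (\<lambda>y. g (tmap Z y)) (cube_line x i t)) has_vector_derivative
               (c * (snd Z $ i * partial i G (tmap Z x)))) (at 0 within L)"
    by (rule has_vector_derivative_transform[OF _ _ d4]) (simp add: L_def eq tmap_line G_def)
  then show ?thesis by (simp add: L_def G_def algebra_simps)
qed

lemma iter_partial_tmap:
  fixes g :: "real^'n \<Rightarrow> real"
  assumes v: "valid Z" and g: "is_Cm m g" and len: "length is \<le> m" and x: "x \<in> ucube"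
  shows "iter_partial is (\<lambda>y. g (tmap Z y)) x = prod_list (map (\<lambda>k. snd Z $ k) is) * iter_partial is g (tmap Z x)"
  using len x
proof (induction "is" arbitrary: x)
  case Nil
  then show ?case by simp
next
  case (Cons i "is")
  have len: "length is < m" using Cons.prems by simp
  have eq: "\<And>y. y \<in> ucube \<Longrightarrow> iter_partial is (\<lambda>y. g (tmap Z y)) y =
      prod_list (map (\<lambda>k. snd Z $ k) is) * iter_partial is g (tmap Z y)"
    using Cons.IH len by simp
  have "iter_partial (i # is) (\<lambda>y. g (tmap Z y)) x
     = vector_derivative (\<lambda>t. iter_partial is (\<lambda>y. g (tmap Z y)) (cube_line x i t)) (at 0 within {t. cube_line x i t \<in> ucube})"
    by (simp add: partial_def)
  also have "\<dots> = snd Z $ i * prod_list (map (\<lambda>k. snd Z $ k) is) * partial i (iter_partial is g) (tmap Z x)"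
    by (rule vector_derivative_within[OF line_nontriv[OF Cons.prems(2)] deriv_step[OF v g len Cons.prems(2) eq]])
  finally show ?case by simp
qed


lemma prod_list_01:
  assumes "valid Z" shows "0 \<le> prod_list (map (\<lambda>k. snd Z $ k) is) \<and> prod_list (map (\<lambda>k. snd Z $ k) is) \<le> 1"
proof (induction "is")
  case Nil then show ?case by simp
next
  case (Cons i "is")
  have "0 < snd Z $ i" "snd Z $ i \<le> 1" using assms by (auto simp: valid_def dest: spec[of _ i])
  then show ?case using Cons by (auto intro: mult_le_one)
qed

lemma continuous_on_tmap: "continuous_on S (tmap Z)"
  unfolding tmap_def by (intro continuous_intros)

lemma rect_Fclass:
  fixes f :: "real^'n \<Rightarrow> real"
  assumes v: "valid Z" and f: "f \<in> Fclass m B"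
  shows "rect_fun f Z \<in> Fclass m B"
proof -
  have g: "is_Cm m f" and gB: "Cnorm m f \<le> B" using f by (auto simp: Fclass_def)
  define c where "c = (\<lambda>is. prod_list (map (\<lambda>k. snd Z $ k) is))"
  have eq: "iter_partial is (\<lambda>y. f (tmap Z y)) x = c is * iter_partial is f (tmap Z x)"
    if "length is \<le> m" "x \<in> ucube" for "is" x
    using iter_partial_tmap[OF v g that] by (simp add: c_def)
  have cont: "continuous_on ucube (iter_partial is (\<lambda>y. f (tmap Z y)))" if "length is \<le> m" for "is"
  proof -
    have "continuous_on ucube (iter_partial is f)" using g that by (auto simp: is_Cm_def)
    then have "continuous_on ucube (\<lambda>x. iter_partial is f (tmap Z x))"
      by (rule continuous_on_compose2[OF _ continuous_on_tmap]) (use tmap_ucube[OF v] in auto)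
    then have "continuous_on ucube (\<lambda>x. c is * iter_partial is f (tmap Z x))"
      by (intro continuous_intros)
    then show ?thesis by (rule continuous_on_cong[THEN iffD1, rotated 2]) (use eq that in auto)
  qed
  have der: "((\<lambda>t. iter_partial is (\<lambda>y. f (tmap Z y)) (cube_line x i t)) has_vector_derivative
             partial i (iter_partial is (\<lambda>y. f (tmap Z y))) x) (at 0 within {t. cube_line x i t \<in> ucube})"
    if "length is < m" "x \<in> ucube" for "is" i x
  proof -
    have eq': "\<And>y. y \<in> ucube \<Longrightarrow> iter_partial is (\<lambda>y. f (tmap Z y)) y = c is * iter_partial is f (tmap Z y)"
      using eq that by simp
    note d = deriv_step[OF v g that(1) that(2) eq', of i]
    have "partial i (iter_partial is (\<lambda>y. f (tmap Z y))) x = snd Z $ i * c is * partial i (iter_partial is f) (tmap Z x)"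
      unfolding partial_def[of i "iter_partial is (\<lambda>y. f (tmap Z y))"]
      by (rule vector_derivative_within[OF line_nontriv[OF that(2)] d])
    with d show ?thesis by simp
  qed
  have Cm: "is_Cm m (\<lambda>y. f (tmap Z y))" unfolding is_Cm_def using cont der by blast
  have "Cnorm m (\<lambda>y. f (tmap Z y)) \<le> B"
    unfolding Cnorm_def
  proof (rule cSup_least)
    show "{\<bar>iter_partial is (\<lambda>y. f (tmap Z y)) x\<bar> |is x. length is \<le> m \<and> x \<in> ucube} \<noteq> {}"
    proof -
      have "\<bar>iter_partial [] (\<lambda>y. f (tmap Z y)) 0\<bar> \<in> {\<bar>iter_partial is (\<lambda>y. f (tmap Z y)) x\<bar> |is x. length is \<le> m \<and> x \<in> ucube}"
        by (auto simp: ucube_def intro!: exI[of _ "[]"])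
      then show ?thesis by blast
    qed
  next
    fix r assume "r \<in> {\<bar>iter_partial is (\<lambda>y. f (tmap Z y)) x\<bar> |is x. length is \<le> m \<and> x \<in> ucube}"
    then obtain "is" x where r: "r = \<bar>iter_partial is (\<lambda>y. f (tmap Z y)) x\<bar>" and l: "length is \<le> m" and x: "x \<in> ucube"
      by blast
    have c01: "0 \<le> c is" "c is \<le> 1" using prod_list_01[OF v] by (auto simp: c_def)
    have "r = c is * \<bar>iter_partial is f (tmap Z x)\<bar>" using r eq[OF l x] c01 by (simp add: abs_mult)
    also have "\<dots> \<le> \<bar>iter_partial is f (tmap Z x)\<bar>" using c01 by (simp add: mult_left_le_one_le)
    also have "\<dots> \<le> Cnorm m f" by (rule Cnorm_ge[OF g l tmap_ucube[OF v x]])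
    finally show "r \<le> B" using gB by simp
  qed
  with Cm show ?thesis by (simp add: Fclass_def rect_fun_tmap)
qed



definition rbox :: "(real^'n::finite) \<times> (real^'n) \<Rightarrow> (real^'n) set" where
  "rbox Z = cbox (fst Z) (fst Z + snd Z)"

definition vol :: "(real^'n::finite) \<times> (real^'n) \<Rightarrow> real" where
  "vol Z = (\<Prod>i\<in>UNIV. snd Z $ i)"

definition mass :: "(real^'n::finite \<Rightarrow> real) \<Rightarrow> (real^'n) \<times> (real^'n) \<Rightarrow> real" where
  "mass f Z = (LINT x:rbox Z|lborel. exp (f x))"

lemma rbox_ucube: assumes "valid Z" shows "rbox Z \<subseteq> ucube"
proof
  fix x assume x: "x \<in> rbox Z"
  have "0 \<le> x$i \<and> x$i \<le> 1" for i
  proof -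
    have "fst Z $ i \<le> x$i" "x$i \<le> fst Z $ i + snd Z $ i" using x by (auto simp: rbox_def mem_box_cart)
    moreover have "0 \<le> fst Z $ i" "fst Z $ i + snd Z $ i \<le> 1" using assms by (auto simp: valid_def)
    ultimately show ?thesis by linarith
  qed
  then show "x \<in> ucube" by (simp add: ucube_def)
qed

lemma vol_pos: "valid Z \<Longrightarrow> 0 < vol Z"
  unfolding vol_def valid_def by (auto intro: prod_pos)

lemma measure_rbox: assumes "valid Z" shows "measure lborel (rbox Z) = vol Z"
proof -
  have "fst Z \<in> rbox Z" using assms unfolding rbox_def valid_def mem_box_cart
    by (simp add: less_imp_le)
  then have "rbox Z \<noteq> {}" by blast
  from content_cbox_cart[OF this[unfolded rbox_def]] show ?thesis
    by (simp add: rbox_def vol_def)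
qed

lemma emeasure_rbox: assumes "valid Z" shows "emeasure lborel (rbox Z) = ennreal (vol Z)"
proof -
  have "emeasure lborel (rbox Z) \<noteq> \<infinity>"
    using emeasure_lborel_cbox_finite[of "fst Z" "fst Z + snd Z"] by (simp add: rbox_def)
  with emeasure_eq_ennreal_measure[of lborel "rbox Z"] measure_rbox[OF assms] show ?thesis by simp
qed

lemma rbox_sets[measurable]: "rbox Z \<in> sets lborel"
  by (simp add: rbox_def)

lemma tmap_in_rbox: assumes "valid Z" shows "tmap Z x \<in> rbox Z \<longleftrightarrow> x \<in> ucube"
proof -
  have "(fst Z $ i \<le> fst Z $ i + snd Z $ i * x $ i \<and> fst Z $ i + snd Z $ i * x $ i \<le> fst Z $ i + snd Z $ i)
        \<longleftrightarrow> (0 \<le> x$i \<and> x$i \<le> 1)" for i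
  proof -
    have "0 < snd Z $ i" using assms by (auto simp: valid_def)
    then show ?thesis by (simp add: mult_le_cancel_left1 mult_nonneg_nonneg zero_le_mult_iff)
  qed
  then show ?thesis by (simp add: rbox_def tmap_def mem_box_cart ucube_def)
qed

lemma lborel_tmap:
  fixes Z :: "(real^'n::finite) \<times> (real^'n)"
  assumes v: "valid Z"
  shows "lborel = density (distr lborel borel (tmap Z)) (\<lambda>_. ennreal (vol Z))"
proof -
  define c where "c = (\<lambda>j::real^'n. snd Z $ axis_index j)"
  have c0: "\<And>j. j \<in> Basis \<Longrightarrow> c j \<noteq> 0" using v unfolding c_def valid_def by (metis less_irrefl)
  have T: "(\<lambda>x. fst Z + (\<Sum>j\<in>Basis. (c j * (x \<bullet> j)) *\<^sub>R j)) = tmap Z"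
  proof
    fix x
    have "(\<chi> k. snd Z $ k * x $ k) = (\<Sum>k\<in>Basis. (snd Z $ axis_index k * (x \<bullet> k)) *\<^sub>R k)"
      using vec_lambda_eq_sum[where f="\<lambda>k u. snd Z $ k * u" and x=x] by simp
    moreover have "tmap Z x = fst Z + (\<chi> k. snd Z $ k * x $ k)"
      by (simp add: tmap_def vec_eq_iff)
    ultimately show "fst Z + (\<Sum>j\<in>Basis. (c j * (x \<bullet> j)) *\<^sub>R j) = tmap Z x"
      by (simp add: c_def)
  qed
  have eqp: "(\<Prod>k:: real^'n \<in> Basis. \<bar>c k\<bar>) = vol Z"
  proof -
    have "(\<Prod>k:: real^'n \<in> Basis. \<bar>snd Z $ axis_index k\<bar>) = (\<Prod>k\<in>UNIV. \<bar>snd Z $ k\<bar>)"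
      by (simp add: Basis_vec_def UNION_singleton_eq_range prod.reindex axis_eq_axis inj_on_def)
    also have "\<dots> = vol Z"
    proof -
      have "\<And>k. \<bar>snd Z $ k\<bar> = snd Z $ k" using v unfolding valid_def by (metis abs_of_pos)
      then show ?thesis by (simp add: vol_def)
    qed
    finally show ?thesis by (simp add: c_def)
  qed
  show ?thesis using lborel_affine_euclidean[of c "fst Z", OF c0] unfolding T eqp by assumption
qed



lemma f_cont: "is_Cm m f \<Longrightarrow> continuous_on ucube f"
  unfolding is_Cm_def by (metis iter_partial.simps(1) list.size(3) le0)

lemma cont_rbox:
  fixes f :: "real^'n \<Rightarrow> real" and Z :: "(real^'n) \<times> (real^'n)"
  assumes "valid Z" "continuous_on ucube f" shows "continuous_on (rbox Z) (\<lambda>x. exp (f x))"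
proof -
  have "continuous_on ucube (\<lambda>x. exp (f x))" using assms(2) by (intro continuous_intros)
  then show ?thesis by (rule continuous_on_subset[OF _ rbox_ucube[OF assms(1)]])
qed

lemma mass_integrable:
  fixes f :: "real^'n \<Rightarrow> real" and Z :: "(real^'n) \<times> (real^'n)"
  assumes "valid Z" "continuous_on ucube f"
  shows "set_integrable lborel (rbox Z) (\<lambda>x. exp (f x))"
  unfolding set_integrable_def
  by (rule borel_integrable_compact) (use cont_rbox[OF assms] in \<open>auto simp: rbox_def\<close>)

lemma const_integrable:
  fixes Z :: "(real^'n::finite) \<times> (real^'n)"
  shows "set_integrable lborel (rbox Z) (\<lambda>x. c::real)"
  unfolding set_integrable_def
  by (rule borel_integrable_compact) (auto simp: rbox_def)

lemma set_integral_const_rbox: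
  assumes "valid Z" shows "(LINT x:rbox Z|lborel. (c::real)) = vol Z * c"
proof -
  have "rbox Z \<in> sets borel" by (simp add: rbox_def)
  then show ?thesis using set_integral_const[of "rbox Z" lborel c] emeasure_rbox[OF assms] measure_rbox[OF assms] by simp
qed

lemma Cnorm1_nonneg:
  assumes f: "is_Cm m f" "1 \<le> m" shows "0 \<le> Cnorm 1 f"
proof -
  have "\<bar>iter_partial [] f 0\<bar> \<le> Cnorm 1 f"
    by (rule Cnorm_ge[OF is_Cm_mono[OF f]]) (auto simp: ucube_def)
  then show ?thesis by linarith
qed

lemma mass_bounds:
  assumes v: "valid Z" and f: "is_Cm m f" "1 \<le> m" and x: "x \<in> rbox Z"
  shows "vol Z * exp (f x - (\<Sum>i\<in>UNIV. snd Z $ i) * Cnorm 1 f) \<le> mass f Z \<and>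
         mass f Z \<le> vol Z * exp (f x + (\<Sum>i\<in>UNIV. snd Z $ i) * Cnorm 1 f)"
proof -
  define W where "W = (\<Sum>i\<in>UNIV. snd Z $ i) * Cnorm 1 f"
  have cont: "continuous_on ucube f" by (rule f_cont[OF f(1)])
  have Cn: "0 \<le> Cnorm 1 f" by (rule Cnorm1_nonneg[OF f])
  have bnd: "\<bar>f y - f x\<bar> \<le> W" if y: "y \<in> rbox Z" for y
  proof -
    have "\<bar>f y - f x\<bar> \<le> (\<Sum>i\<in>UNIV. \<bar>y$i - x$i\<bar>) * Cnorm 1 f"
      by (rule lip_cube[OF f]) (use y x rbox_ucube[OF v] in auto)
    also have "\<dots> \<le> W" unfolding W_def
    proof (intro mult_right_mono Cn sum_mono)
      fix i
      have "fst Z $ i \<le> x$i" "x$i \<le> fst Z $ i + snd Z $ i" using x by (auto simp: rbox_def mem_box_cart)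
      moreover have "fst Z $ i \<le> y$i" "y$i \<le> fst Z $ i + snd Z $ i" using y by (auto simp: rbox_def mem_box_cart)
      ultimately show "\<bar>y$i - x$i\<bar> \<le> snd Z $ i" by linarith
    qed
    finally show ?thesis .
  qed
  have bnd': "f y \<le> f x + W" "f x - W \<le> f y" if "y \<in> rbox Z" for y
    using bnd[OF that] by (auto simp: abs_le_iff)
  have "mass f Z \<le> (LINT y:rbox Z|lborel. exp (f x + W))"
    unfolding mass_def
    by (rule set_integral_mono[OF mass_integrable[OF v cont] const_integrable]) (simp add: bnd')
  also have "\<dots> = vol Z * exp (f x + W)" by (rule set_integral_const_rbox[OF v])
  finally have up: "mass f Z \<le> vol Z * exp (f x + W)" .
  have "(LINT y:rbox Z|lborel. exp (f x - W)) \<le> mass f Z"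
    unfolding mass_def
    by (rule set_integral_mono[OF const_integrable mass_integrable[OF v cont]]) (simp add: bnd')
  moreover have "(LINT y:rbox Z|lborel. exp (f x - W)) = vol Z * exp (f x - W)" by (rule set_integral_const_rbox[OF v])
  ultimately show ?thesis using up by (simp add: W_def)
qed

lemma fst_in_rbox: "valid Z \<Longrightarrow> fst Z \<in> rbox Z"
  by (auto simp: rbox_def mem_box_cart valid_def less_imp_le)

lemma mass_pos:
  assumes v: "valid Z" and f: "is_Cm m f" "1 \<le> m" shows "0 < mass f Z"
proof -
  have "vol Z * exp (f (fst Z) - (\<Sum>i\<in>UNIV. snd Z $ i) * Cnorm 1 f) \<le> mass f Z"
    using mass_bounds[OF v f fst_in_rbox[OF v]] by blast
  moreover have "0 < vol Z * exp (f (fst Z) - (\<Sum>i\<in>UNIV. snd Z $ i) * Cnorm 1 f)"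
    using vol_pos[OF v] by simp
  ultimately show ?thesis by linarith
qed

lemma tmap_measurable: "tmap Z \<in> lborel \<rightarrow>\<^sub>M borel"
  unfolding measurable_lborel2 by (rule borel_measurable_continuous_onI[OF continuous_on_tmap])

lemma mass_change:
  assumes v: "valid Z" and cont: "continuous_on ucube f"
  shows "mass f Z = vol Z * Zfun (rect_fun f Z)"
proof -
  define F where "F = (\<lambda>y. indicator (rbox Z) y *\<^sub>R exp (f y))"
  have meas: "F \<in> borel_measurable borel"
    unfolding F_def by (rule borel_measurable_continuous_on_indicator) (use cont_rbox[OF v cont] in \<open>auto simp: rbox_def\<close>)
  have "mass f Z = integral\<^sup>L lborel F" by (simp add: mass_def set_lebesgue_integral_def F_def)
  also have "\<dots> = integral\<^sup>L (density (distr lborel borel (tmap Z)) (\<lambda>_. ennreal (vol Z))) F"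
    using arg_cong[OF lborel_tmap[OF v], of "\<lambda>M. integral\<^sup>L M F"] .
  also have "\<dots> = integral\<^sup>L (distr lborel borel (tmap Z)) (\<lambda>y. vol Z *\<^sub>R F y)"
    by (rule integral_density) (use meas vol_pos[OF v] in auto)
  also have "\<dots> = integral\<^sup>L lborel (\<lambda>x. vol Z *\<^sub>R F (tmap Z x))"
    by (rule integral_distr[OF tmap_measurable]) (use meas in auto)
  also have "\<dots> = integral\<^sup>L lborel (\<lambda>x. vol Z * (indicator ucube x *\<^sub>R exp (f (tmap Z x))))"
    by (simp add: F_def tmap_in_rbox[OF v] indicator_def)
  also have "\<dots> = vol Z * integral\<^sup>L lborel (\<lambda>x. indicator ucube x *\<^sub>R exp (f (tmap Z x)))"
    by (rule integral_mult_right_zero)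
  also have "\<dots> = vol Z * Zfun (rect_fun f Z)"
    by (simp add: Zfun_def set_lebesgue_integral_def rect_fun_tmap)
  finally show ?thesis .
qed

lemma Lfun_rect:
  assumes v: "valid Z" and f: "is_Cm m f" "1 \<le> m"
  shows "Lfun (rect_fun f Z) = ln (mass f Z / vol Z)"
  using mass_change[OF v f_cont[OF f(1)]] vol_pos[OF v] by (simp add: Lfun_def)



lemma valid_split:
  assumes "valid Z" shows "valid (split1 j Z)" "valid (split2 j Z)"
proof -
  have a: "0 \<le> fst Z $ i" "0 < snd Z $ i" "fst Z $ i + snd Z $ i \<le> 1" for i
    using assms by (auto simp: valid_def)
  show "valid (split1 j Z)" unfolding valid_def
  proof
    fix i show "0 \<le> fst (split1 j Z) $ i \<and> 0 < snd (split1 j Z) $ i \<and> fst (split1 j Z) $ i + snd (split1 j Z) $ i \<le> 1"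
      using a[of i] by (auto simp: split1_def)
  qed
  show "valid (split2 j Z)" unfolding valid_def
  proof
    fix i show "0 \<le> fst (split2 j Z) $ i \<and> 0 < snd (split2 j Z) $ i \<and> fst (split2 j Z) $ i + snd (split2 j Z) $ i \<le> 1"
      using a[of i] by (auto simp: split2_def)
  qed
qed

lemma snd_split: "snd (split1 j Z) = snd (split2 j Z)"
  by (simp add: split1_def split2_def)

lemma vol_split: "vol (split1 j Z) = vol (split2 j Z)"
  by (simp add: vol_def snd_split)

lemma mem_rbox: "x \<in> rbox Z \<longleftrightarrow> (\<forall>k. fst Z $ k \<le> x $ k \<and> x $ k \<le> fst Z $ k + snd Z $ k)"
  by (simp add: rbox_def mem_box_cart)

lemma rbox_split:
  assumes v: "valid Z"
  shows "rbox Z = rbox (split1 j Z) \<union> rbox (split2 j Z)"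
proof -
  have a: "0 \<le> fst Z $ i" "0 < snd Z $ i" "fst Z $ i + snd Z $ i \<le> 1" for i
    using v by (auto simp: valid_def)
  have s1: "x \<in> rbox (split1 j Z) \<longleftrightarrow> (\<forall>k. fst Z $ k \<le> x $ k \<and> x $ k \<le> fst Z $ k + (if k = j then snd Z $ k / 2 else snd Z $ k))" for x
    by (simp add: mem_rbox split1_def)
  have s2: "x \<in> rbox (split2 j Z) \<longleftrightarrow> (\<forall>k. (if k = j then fst Z $ k + snd Z $ k / 2 else fst Z $ k) \<le> x $ k \<and> x $ k \<le> fst Z $ k + snd Z $ k)" for x
  proof -
    have "(if k = j then fst Z $ k + snd Z $ k / 2 else fst Z $ k) + (if k = j then snd Z $ k / 2 else snd Z $ k) = fst Z $ k + snd Z $ k" for k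
      by auto
    then show ?thesis by (simp add: mem_rbox split2_def)
  qed
  show ?thesis
  proof (intro set_eqI iffI)
    fix x assume x: "x \<in> rbox Z"
    have xk: "fst Z $ k \<le> x $ k \<and> x $ k \<le> fst Z $ k + snd Z $ k" for k using x by (simp add: mem_rbox)
    show "x \<in> rbox (split1 j Z) \<union> rbox (split2 j Z)"
    proof (cases "x $ j \<le> fst Z $ j + snd Z $ j / 2")
      case True
      have "fst Z $ k \<le> x $ k \<and> x $ k \<le> fst Z $ k + (if k = j then snd Z $ k / 2 else snd Z $ k)" for k
        using xk[of k] True by auto
      then show ?thesis using s1 by blast
    next
      case False
      have "(if k = j then fst Z $ k + snd Z $ k / 2 else fst Z $ k) \<le> x $ k \<and> x $ k \<le> fst Z $ k + snd Z $ k" for k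
        using xk[of k] False by auto
      then show ?thesis using s2 by blast
    qed
  next
    fix x assume "x \<in> rbox (split1 j Z) \<union> rbox (split2 j Z)"
    then have "fst Z $ k \<le> x $ k \<and> x $ k \<le> fst Z $ k + snd Z $ k" for k
    proof
      assume "x \<in> rbox (split1 j Z)"
      then show ?thesis using s1[of x] a[of k] by (auto dest!: spec[of _ k] split: if_splits)
    next
      assume "x \<in> rbox (split2 j Z)"
      then show ?thesis using s2[of x] a[of k] by (auto dest!: spec[of _ k] split: if_splits)
    qed
    then show "x \<in> rbox Z" by (simp add: mem_rbox)
  qed
qed

lemma rbox_split_sub:
  assumes "valid Z" shows "rbox (split1 j Z) \<subseteq> rbox Z" "rbox (split2 j Z) \<subseteq> rbox Z"
  using rbox_split[OF assms, of j] by auto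

lemma null_cbox_flat:
  fixes a b :: "real^'n"
  assumes "a$j = b$j" shows "cbox a b \<in> null_sets lborel"
proof -
  have "emeasure lborel (cbox a b) = 0"
  proof (cases "cbox a b = {}")
    case True then show ?thesis by simp
  next
    case False
    have "measure lborel (cbox a b) = 0" using content_cbox_cart[OF False] assms by (simp; metis)
    moreover have "emeasure lborel (cbox a b) \<noteq> \<infinity>" using emeasure_lborel_cbox_finite[of a b] by simp
    ultimately show ?thesis using emeasure_eq_ennreal_measure[of lborel "cbox a b"] by simp
  qed
  then show ?thesis by (simp add: null_sets_def)
qed

lemma rbox_split_null:
  assumes v: "valid Z"
  shows "rbox (split1 j Z) \<inter> rbox (split2 j Z) \<in> null_sets lborel"
proof -
  define c where "c = fst Z $ j + snd Z $ j / 2"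
  define a where "a = (\<chi> k. if k = j then c else fst Z $ k)"
  define b where "b = (\<chi> k. if k = j then c else fst Z $ k + snd Z $ k)"
  have "rbox (split1 j Z) \<inter> rbox (split2 j Z) \<subseteq> cbox a b"
  proof
    fix x assume x: "x \<in> rbox (split1 j Z) \<inter> rbox (split2 j Z)"
    have "a $ k \<le> x $ k \<and> x $ k \<le> b $ k" for k
    proof -
      have 1: "fst Z $ k \<le> x $ k \<and> x $ k \<le> fst Z $ k + (if k = j then snd Z $ k / 2 else snd Z $ k)"
        using x by (simp add: mem_rbox split1_def)
      have 2: "(if k = j then fst Z $ k + snd Z $ k / 2 else fst Z $ k) \<le> x $ k \<and>
               x $ k \<le> (if k = j then fst Z $ k + snd Z $ k / 2 else fst Z $ k) + (if k = j then snd Z $ k / 2 else snd Z $ k)"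
        using x by (simp add: mem_rbox split2_def)
      show ?thesis using 1 2 by (cases "k = j") (auto simp: a_def b_def c_def)
    qed
    then show "x \<in> cbox a b" by (simp add: mem_box_cart)
  qed
  moreover have "a $ j = b $ j" by (simp add: a_def b_def)
  then have "cbox a b \<in> null_sets lborel" by (rule null_cbox_flat)
  moreover have "rbox (split1 j Z) \<inter> rbox (split2 j Z) \<in> sets lborel" by (intro sets.Int rbox_sets)
  ultimately show ?thesis using null_sets_subset[of "cbox a b" lborel "rbox (split1 j Z) \<inter> rbox (split2 j Z)"] by blast
qed

lemma mass_split:
  assumes v: "valid Z" and cont: "continuous_on ucube f"
  shows "mass f Z = mass f (split1 j Z) + mass f (split2 j Z)"
proof -
  have "mass f Z = (LINT x:rbox (split1 j Z) \<union> rbox (split2 j Z)|lborel. exp (f x))"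
    unfolding mass_def using rbox_split[OF v, of j] by simp
  also have "\<dots> = mass f (split1 j Z) + mass f (split2 j Z)"
    unfolding mass_def
  proof (rule set_integral_Un_AE)
    show "AE x in lborel. \<not> (x \<in> rbox (split1 j Z) \<and> x \<in> rbox (split2 j Z))"
      using AE_not_in[OF rbox_split_null[OF v, of j]] by (auto elim!: eventually_mono)
    show "set_integrable lborel (rbox (split1 j Z)) (\<lambda>x. exp (f x))"
      by (rule mass_integrable[OF valid_split(1)[OF v] cont])
    show "set_integrable lborel (rbox (split2 j Z)) (\<lambda>x. exp (f x))"
      by (rule mass_integrable[OF valid_split(2)[OF v] cont])
  qed (auto simp: rbox_def)
  finally show ?thesis .
qed

lemma sigmoid_bounds:
  fixes a b m1 m2 v E :: real
  assumes m1: "0 < m1" and m2: "0 < m2" and v: "0 < v"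
    and ha: "\<bar>a - ln (m1 / v)\<bar> \<le> E" and hb: "\<bar>b - ln (m2 / v)\<bar> \<le> E"
  shows "m1 / (m1 + m2) * exp (- (2 * E)) \<le> sigmoid (a - b) \<and> sigmoid (a - b) \<le> m1 / (m1 + m2) * exp (2 * E)"
proof -
  define \<alpha> where "\<alpha> = m1 / v"
  define \<beta> where "\<beta> = m2 / v"
  have \<alpha>p: "0 < \<alpha>" and \<beta>p: "0 < \<beta>" using m1 m2 v by (auto simp: \<alpha>_def \<beta>_def)
  have ea: "\<alpha> * exp (- E) \<le> exp a \<and> exp a \<le> \<alpha> * exp E"
  proof -
    have "ln \<alpha> - E \<le> a" "a \<le> ln \<alpha> + E" using ha by (auto simp: \<alpha>_def abs_le_iff)
    then have "exp (ln \<alpha> - E) \<le> exp a" "exp a \<le> exp (ln \<alpha> + E)" by simp_all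
    then show ?thesis using \<alpha>p by (simp add: exp_diff exp_add exp_minus field_simps)
  qed
  have eb: "\<beta> * exp (- E) \<le> exp b \<and> exp b \<le> \<beta> * exp E"
  proof -
    have "ln \<beta> - E \<le> b" "b \<le> ln \<beta> + E" using hb by (auto simp: \<beta>_def abs_le_iff)
    then have "exp (ln \<beta> - E) \<le> exp b" "exp b \<le> exp (ln \<beta> + E)" by simp_all
    then show ?thesis using \<beta>p by (simp add: exp_diff exp_add exp_minus field_simps)
  qed
  have sig: "sigmoid (a - b) = exp a / (exp a + exp b)"
    unfolding sigmoid_def by (simp add: exp_diff field_simps)
  have ratio: "\<alpha> / (\<alpha> + \<beta>) = m1 / (m1 + m2)" using v by (simp add: \<alpha>_def \<beta>_def field_simps)
  have e2: "exp (2 * E) = exp E * exp E" by (simp add: mult_exp_exp)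
  have em2: "exp (- (2 * E)) = exp (- E) * exp (- E)" by (simp add: mult_exp_exp)
  have pos: "0 < (\<alpha> + \<beta>) * exp (- E)" using \<alpha>p \<beta>p by simp
  have le1: "(\<alpha> + \<beta>) * exp (- E) \<le> exp a + exp b" using ea eb by (simp add: algebra_simps)
  have le2: "exp a + exp b \<le> (\<alpha> + \<beta>) * exp E" using ea eb by (simp add: algebra_simps)
  have "exp a / (exp a + exp b) \<le> (\<alpha> * exp E) / ((\<alpha> + \<beta>) * exp (- E))"
    by (rule frac_le[OF _ _ pos le1]) (use ea \<alpha>p in auto)
  also have "\<dots> = \<alpha> / (\<alpha> + \<beta>) * exp (2 * E)"
    using \<alpha>p \<beta>p unfolding e2 by (simp add: exp_minus field_simps)
  finally have up: "sigmoid (a - b) \<le> m1 / (m1 + m2) * exp (2 * E)" by (simp add: sig ratio)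
  have "\<alpha> / (\<alpha> + \<beta>) * exp (- (2 * E)) = (\<alpha> * exp (- E)) / ((\<alpha> + \<beta>) * exp E)"
    using \<alpha>p \<beta>p unfolding em2 by (simp add: exp_minus field_simps)
  also have "\<dots> \<le> exp a / (exp a + exp b)"
    by (rule frac_le[OF _ _ _ le2]) (use ea in \<open>auto intro: add_pos_pos\<close>)
  finally have lo: "m1 / (m1 + m2) * exp (- (2 * E)) \<le> sigmoid (a - b)" by (simp add: sig ratio)
  show ?thesis using up lo by simp
qed

lemma sigmoid_swap: "1 - sigmoid u = sigmoid (- u)"
proof -
  have e: "exp (-u) * exp u = 1" by (simp add: exp_minus)
  have p1: "1 + exp (-u) > 0" "1 + exp u > 0" using exp_gt_zero[of "-u"] exp_gt_zero[of u] by linarith+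
  have "1 - 1/(1 + exp(-u)) = exp(-u)/(1 + exp(-u))" using p1 by (simp add: field_simps)
  also have "\<dots> = (exp(-u) * exp u)/((1 + exp(-u)) * exp u)" using p1 by simp
  also have "\<dots> = 1/(exp u + 1)" using e by (simp add: algebra_simps)
  finally show ?thesis by (simp add: sigmoid_def add.commute)
qed

lemma sigmoid_01: "0 < sigmoid u" "sigmoid u < 1"
proof -
  have q: "0 < 1 + exp (-u)" "1 < 1 + exp (-u)" using exp_gt_zero[of "-u"] by linarith+
  show "0 < sigmoid u" unfolding sigmoid_def using q(1) by simp
  show "sigmoid u < 1" unfolding sigmoid_def by (subst divide_less_eq_1_pos[OF q(1)]) (rule q(2))
qed



definition pj :: "((real^'n \<Rightarrow> real) \<Rightarrow> real) \<Rightarrow> (real^'n::finite \<Rightarrow> real) \<Rightarrow> 'n \<Rightarrow> (real^'n) \<times> (real^'n) \<Rightarrow> real" where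
  "pj Lt f j Z = sigmoid (Lt (rect_fun f (split1 j Z)) - Lt (rect_fun f (split2 j Z)))"

fun sden :: "((real^'n \<Rightarrow> real) \<Rightarrow> real) \<Rightarrow> (real^'n::finite \<Rightarrow> real) \<Rightarrow> 'n list \<Rightarrow> (real^'n) \<times> (real^'n) \<Rightarrow> real^'n \<Rightarrow> real" where
  "sden Lt f [] Z x = indicator (rbox Z) x / vol Z"
| "sden Lt f (j # js) Z x = pj Lt f j Z * sden Lt f js (split1 j Z) x + (1 - pj Lt f j Z) * sden Lt f js (split2 j Z) x"

lemma pj_01: "0 < pj Lt f j Z" "pj Lt f j Z < 1"
  unfolding pj_def by (rule sigmoid_01)+

lemma sden_nonneg: "valid Z \<Longrightarrow> 0 \<le> sden Lt f js Z x"
proof (induction js arbitrary: Z)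
  case Nil
  then show ?case using vol_pos[OF Nil] by simp
next
  case (Cons j js)
  have "0 \<le> sden Lt f js (split1 j Z) x" "0 \<le> sden Lt f js (split2 j Z) x"
    using Cons.IH valid_split[OF Cons.prems] by auto
  moreover have "0 \<le> pj Lt f j Z" "0 \<le> 1 - pj Lt f j Z" using pj_01[of Lt f j Z] by auto
  ultimately show ?case by simp
qed

lemma sden_zero: "valid Z \<Longrightarrow> x \<notin> rbox Z \<Longrightarrow> sden Lt f js Z x = 0"
proof (induction js arbitrary: Z)
  case Nil
  then show ?case by simp
next
  case (Cons j js)
  have "x \<notin> rbox (split1 j Z)" "x \<notin> rbox (split2 j Z)"
    using Cons.prems rbox_split_sub[OF Cons.prems(1), of j] by auto
  then show ?case using Cons.IH valid_split[OF Cons.prems(1)] by simp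
qed

lemma sden_meas[measurable]: "sden Lt f js Z \<in> borel_measurable lborel"
proof (induction js arbitrary: Z)
  case Nil
  show ?case by simp
next
  case (Cons j js)
  note [measurable] = Cons.IH
  show ?case by simp
qed

lemma run_emeasure:
  assumes "valid Z" and A: "A \<in> sets lborel"
  shows "(\<integral>\<^sup>+R. emeasure (uniform_measure lborel (rbox R)) A \<partial>measure_pmf (bisect_run Lt f js Z))
         = (\<integral>\<^sup>+x\<in>A. ennreal (sden Lt f js Z x) \<partial>lborel)"
  using assms(1)
proof (induction js arbitrary: Z)
  case Nil
  have v: "0 < vol Z" by (rule vol_pos[OF Nil])
  have "(\<integral>\<^sup>+R. emeasure (uniform_measure lborel (rbox R)) A \<partial>measure_pmf (bisect_run Lt f [] Z))
        = emeasure (uniform_measure lborel (rbox Z)) A" by simp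
  also have "\<dots> = emeasure lborel (rbox Z \<inter> A) / ennreal (vol Z)"
    using emeasure_uniform_measure[OF rbox_sets A] emeasure_rbox[OF Nil] by simp
  also have "\<dots> = ennreal (1 / vol Z) * emeasure lborel (rbox Z \<inter> A)"
    using v by (simp add: divide_ennreal_def inverse_ennreal mult.commute inverse_eq_divide)
  also have "\<dots> = (\<integral>\<^sup>+x. ennreal (1 / vol Z) * indicator (rbox Z \<inter> A) x \<partial>lborel)"
    using A by (simp add: nn_integral_cmult_indicator)
  also have "\<dots> = (\<integral>\<^sup>+x\<in>A. ennreal (sden Lt f [] Z x) \<partial>lborel)"
    by (intro nn_integral_cong) (auto split: split_indicator)
  finally show ?case .
next
  case (Cons j js)
  define p where "p = pj Lt f j Z"
  have p01: "0 \<le> p" "p \<le> 1" using pj_01[of Lt f j Z] by (auto simp: p_def)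
  define G where "G = (\<lambda>Z'. \<integral>\<^sup>+R. emeasure (uniform_measure lborel (rbox R)) A \<partial>measure_pmf (bisect_run Lt f js Z'))"
  have IH1: "G (split1 j Z) = (\<integral>\<^sup>+x\<in>A. ennreal (sden Lt f js (split1 j Z) x) \<partial>lborel)"
    unfolding G_def by (rule Cons.IH[OF valid_split(1)[OF Cons.prems]])
  have IH2: "G (split2 j Z) = (\<integral>\<^sup>+x\<in>A. ennreal (sden Lt f js (split2 j Z) x) \<partial>lborel)"
    unfolding G_def by (rule Cons.IH[OF valid_split(2)[OF Cons.prems]])
  have "(\<integral>\<^sup>+R. emeasure (uniform_measure lborel (rbox R)) A \<partial>measure_pmf (bisect_run Lt f (j # js) Z))
        = (\<integral>\<^sup>+b. G (if b then split1 j Z else split2 j Z) \<partial>measure_pmf (bernoulli_pmf p))"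
    by (simp add: bisect_step_def G_def p_def pj_def)
  also have "\<dots> = G (split1 j Z) * ennreal p + G (split2 j Z) * ennreal (1 - p)"
    using p01 by simp
  also have "\<dots> = ennreal p * (\<integral>\<^sup>+x. ennreal (sden Lt f js (split1 j Z) x) * indicator A x \<partial>lborel)
                 + ennreal (1 - p) * (\<integral>\<^sup>+x. ennreal (sden Lt f js (split2 j Z) x) * indicator A x \<partial>lborel)"
    by (simp add: IH1 IH2 mult.commute)
  also have "\<dots> = (\<integral>\<^sup>+x. ennreal p * (ennreal (sden Lt f js (split1 j Z) x) * indicator A x)
                 + ennreal (1 - p) * (ennreal (sden Lt f js (split2 j Z) x) * indicator A x) \<partial>lborel)"
    using A by (subst nn_integral_add) (auto simp: nn_integral_cmult)
  also have "\<dots> = (\<integral>\<^sup>+x\<in>A. ennreal (sden Lt f (j # js) Z x) \<partial>lborel)"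
  proof (intro nn_integral_cong)
    fix x
    have s1: "0 \<le> sden Lt f js (split1 j Z) x" and s2: "0 \<le> sden Lt f js (split2 j Z) x"
      using sden_nonneg[OF valid_split(1)[OF Cons.prems]] sden_nonneg[OF valid_split(2)[OF Cons.prems]] by auto
    have "ennreal (sden Lt f (j # js) Z x) = ennreal p * ennreal (sden Lt f js (split1 j Z) x)
             + ennreal (1 - p) * ennreal (sden Lt f js (split2 j Z) x)"
      using p01 s1 s2 by (simp add: p_def[symmetric] ennreal_mult)
    then show "ennreal p * (ennreal (sden Lt f js (split1 j Z) x) * indicator A x)
                 + ennreal (1 - p) * (ennreal (sden Lt f js (split2 j Z) x) * indicator A x)
             = ennreal (sden Lt f (j # js) Z x) * indicator A x"
      by (simp add: distrib_right mult.assoc)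
  qed
  finally show ?case .
qed



definition Cb :: "real \<Rightarrow> (real^'n::finite \<Rightarrow> real) \<Rightarrow> 'n list \<Rightarrow> (real^'n) \<times> (real^'n) \<Rightarrow> real" where
  "Cb E f js Z = 2 * real (length js) * E + (\<Sum>i\<in>UNIV. snd Z $ i / 2 ^ count_list js i) * Cnorm 1 f"

lemma Cb_split:
  "Cb E f (j # js) Z = 2 * E + Cb E f js (split1 j Z)" "Cb E f (j # js) Z = 2 * E + Cb E f js (split2 j Z)"
proof -
  have "(\<Sum>i\<in>UNIV. snd Z $ i / 2 ^ count_list (j # js) i) = (\<Sum>i\<in>UNIV. snd (split1 j Z) $ i / 2 ^ count_list js i)"
    by (intro sum.cong) (auto simp: split1_def)
  then show "Cb E f (j # js) Z = 2 * E + Cb E f js (split1 j Z)" "Cb E f (j # js) Z = 2 * E + Cb E f js (split2 j Z)"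
    using snd_split[of j Z] by (simp_all add: Cb_def algebra_simps)
qed

lemma p_bounds:
  assumes v: "valid Z" and f: "f \<in> Fclass m B" "1 \<le> m" and E: "\<forall>g\<in>Fclass m B. \<bar>Lt g - Lfun g\<bar> \<le> E"
  shows "mass f (split1 j Z) / mass f Z * exp (- (2 * E)) \<le> pj Lt f j Z \<and> pj Lt f j Z \<le> mass f (split1 j Z) / mass f Z * exp (2 * E)"
    and "mass f (split2 j Z) / mass f Z * exp (- (2 * E)) \<le> 1 - pj Lt f j Z \<and> 1 - pj Lt f j Z \<le> mass f (split2 j Z) / mass f Z * exp (2 * E)"
proof -
  have fC: "is_Cm m f" using f by (simp add: Fclass_def)
  define Z1 where "Z1 = split1 j Z"
  define Z2 where "Z2 = split2 j Z"
  have v1: "valid Z1" and v2: "valid Z2" using valid_split[OF v] by (auto simp: Z1_def Z2_def)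
  have m1: "0 < mass f Z1" by (rule mass_pos[OF v1 fC f(2)])
  have m2: "0 < mass f Z2" by (rule mass_pos[OF v2 fC f(2)])
  have vp: "0 < vol Z1" by (rule vol_pos[OF v1])
  have vs: "vol Z2 = vol Z1" by (simp add: Z1_def Z2_def vol_split)
  have ha: "\<bar>Lt (rect_fun f Z1) - ln (mass f Z1 / vol Z1)\<bar> \<le> E"
    using E rect_Fclass[OF v1 f(1)] Lfun_rect[OF v1 fC f(2)] by auto
  have hb: "\<bar>Lt (rect_fun f Z2) - ln (mass f Z2 / vol Z1)\<bar> \<le> E"
    using E rect_Fclass[OF v2 f(1)] Lfun_rect[OF v2 fC f(2)] vs by auto
  have ms: "mass f Z = mass f Z1 + mass f Z2"
    unfolding Z1_def Z2_def by (rule mass_split[OF v f_cont[OF fC]])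
  show "mass f (split1 j Z) / mass f Z * exp (- (2 * E)) \<le> pj Lt f j Z \<and> pj Lt f j Z \<le> mass f (split1 j Z) / mass f Z * exp (2 * E)"
    using sigmoid_bounds[OF m1 m2 vp ha hb] unfolding pj_def ms by (simp add: Z1_def Z2_def)
  have "1 - pj Lt f j Z = sigmoid (Lt (rect_fun f Z2) - Lt (rect_fun f Z1))"
    unfolding pj_def sigmoid_swap by (simp add: Z1_def Z2_def)
  moreover have ms': "mass f Z2 + mass f Z1 = mass f Z" using ms by simp
  ultimately show "mass f (split2 j Z) / mass f Z * exp (- (2 * E)) \<le> 1 - pj Lt f j Z \<and> 1 - pj Lt f j Z \<le> mass f (split2 j Z) / mass f Z * exp (2 * E)"
    using sigmoid_bounds[OF m2 m1 vp hb ha, unfolded ms'] by (simp add: Z1_def Z2_def)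
qed

lemma exp_combine:
  fixes a m m1 e c :: real
  assumes "0 < m1" "0 < m"
  shows "m1 / m * exp e * (exp a / m1 * exp c) = exp a / m * exp (e + c)"
  using assms by (simp add: exp_add field_simps)

lemma sden_bound:
  assumes f: "f \<in> Fclass m B" "1 \<le> m" and E: "\<forall>g\<in>Fclass m B. \<bar>Lt g - Lfun g\<bar> \<le> E" and v: "valid Z"
  shows "AE x in lborel. x \<in> rbox Z \<longrightarrow> 0 < sden Lt f js Z x \<and>
           exp (f x) / mass f Z * exp (- Cb E f js Z) \<le> sden Lt f js Z x \<and>
           sden Lt f js Z x \<le> exp (f x) / mass f Z * exp (Cb E f js Z)"
  using v
proof (induction js arbitrary: Z)
  case Nil
  have fC: "is_Cm m f" using f by (simp add: Fclass_def)
  show ?case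
  proof (rule AE_I2, intro impI)
    fix x assume x: "x \<in> rbox Z"
    define W where "W = (\<Sum>i\<in>UNIV. snd Z $ i) * Cnorm 1 f"
    have CW: "Cb E f [] Z = W" by (simp add: Cb_def W_def)
    have mb: "vol Z * exp (f x - W) \<le> mass f Z" "mass f Z \<le> vol Z * exp (f x + W)"
      using mass_bounds[OF Nil fC f(2) x] by (simp_all add: W_def)
    have vp: "0 < vol Z" by (rule vol_pos[OF Nil])
    have mp: "0 < mass f Z" by (rule mass_pos[OF Nil fC f(2)])
    have sd: "sden Lt f [] Z x = 1 / vol Z" using x by simp
    have lo: "exp (f x) / mass f Z * exp (- W) \<le> 1 / vol Z"
    proof -
      have "exp (f x) / mass f Z * exp (- W) = exp (f x - W) / mass f Z" by (simp add: exp_diff exp_minus field_simps)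
      also have "\<dots> \<le> exp (f x - W) / (vol Z * exp (f x - W))"
        by (rule divide_left_mono[OF mb(1)]) (use vp mp in auto)
      also have "\<dots> = 1 / vol Z" by simp
      finally show ?thesis .
    qed
    have up: "1 / vol Z \<le> exp (f x) / mass f Z * exp W"
    proof -
      have "1 / vol Z = exp (f x + W) / (vol Z * exp (f x + W))" by simp
      also have "\<dots> \<le> exp (f x + W) / mass f Z"
        by (rule divide_left_mono[OF mb(2)]) (use vp mp in auto)
      also have "\<dots> = exp (f x) / mass f Z * exp W" by (simp add: exp_add)
      finally show ?thesis .
    qed
    show "0 < sden Lt f [] Z x \<and> exp (f x) / mass f Z * exp (- Cb E f [] Z) \<le> sden Lt f [] Z x \<and>
          sden Lt f [] Z x \<le> exp (f x) / mass f Z * exp (Cb E f [] Z)"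
      using lo up vp unfolding sd CW by simp
  qed
next
  case (Cons j js)
  have fC: "is_Cm m f" using f by (simp add: Fclass_def)
  define Z1 where "Z1 = split1 j Z"
  define Z2 where "Z2 = split2 j Z"
  define p where "p = pj Lt f j Z"
  have v1: "valid Z1" and v2: "valid Z2" using valid_split[OF Cons.prems] by (auto simp: Z1_def Z2_def)
  have m1: "0 < mass f Z1" by (rule mass_pos[OF v1 fC f(2)])
  have m2: "0 < mass f Z2" by (rule mass_pos[OF v2 fC f(2)])
  have mp: "0 < mass f Z" by (rule mass_pos[OF Cons.prems fC f(2)])
  have pb1: "mass f Z1 / mass f Z * exp (- (2 * E)) \<le> p \<and> p \<le> mass f Z1 / mass f Z * exp (2 * E)"
    using p_bounds(1)[OF Cons.prems f E] by (simp add: Z1_def p_def)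
  have pb2: "mass f Z2 / mass f Z * exp (- (2 * E)) \<le> 1 - p \<and> 1 - p \<le> mass f Z2 / mass f Z * exp (2 * E)"
    using p_bounds(2)[OF Cons.prems f E] by (simp add: Z2_def p_def)
  have p01: "0 < p" "0 < 1 - p" using pj_01[of Lt f j Z] by (auto simp: p_def)
  have C1: "Cb E f (j # js) Z = 2 * E + Cb E f js Z1" and C2: "Cb E f (j # js) Z = 2 * E + Cb E f js Z2"
    unfolding Z1_def Z2_def by (rule Cb_split(1), rule Cb_split(2))
  have sd: "sden Lt f (j # js) Z x = p * sden Lt f js Z1 x + (1 - p) * sden Lt f js Z2 x" for x
    by (simp add: p_def Z1_def Z2_def)
  note AE1 = Cons.IH[OF v1] and AE2 = Cons.IH[OF v2]
  have AE3: "AE x in lborel. x \<notin> rbox Z1 \<inter> rbox Z2"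
    using AE_not_in[OF rbox_split_null[OF Cons.prems, of j]] by (simp add: Z1_def Z2_def)
  have un: "rbox Z = rbox Z1 \<union> rbox Z2" using rbox_split[OF Cons.prems, of j] by (simp add: Z1_def Z2_def)
  show ?case using AE1 AE2 AE3
  proof eventually_elim
    case (elim x)
    show ?case
    proof
      assume xZ: "x \<in> rbox Z"
      show "0 < sden Lt f (j # js) Z x \<and>
           exp (f x) / mass f Z * exp (- Cb E f (j # js) Z) \<le> sden Lt f (j # js) Z x \<and>
           sden Lt f (j # js) Z x \<le> exp (f x) / mass f Z * exp (Cb E f (j # js) Z)"
      proof (cases "x \<in> rbox Z1")
        case True
        then have "x \<notin> rbox Z2" using elim(3) by auto
        then have s2: "sden Lt f js Z2 x = 0" by (rule sden_zero[OF v2])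
        have b1: "0 < sden Lt f js Z1 x \<and> exp (f x) / mass f Z1 * exp (- Cb E f js Z1) \<le> sden Lt f js Z1 x \<and>
           sden Lt f js Z1 x \<le> exp (f x) / mass f Z1 * exp (Cb E f js Z1)" using elim(1) True by blast
        have "exp (f x) / mass f Z * exp (- Cb E f (j # js) Z)
              = (mass f Z1 / mass f Z * exp (- (2 * E))) * (exp (f x) / mass f Z1 * exp (- Cb E f js Z1))"
          unfolding C1 using exp_combine[OF m1 mp, of "- (2 * E)" "f x" "- Cb E f js Z1"] by simp
        also have "\<dots> \<le> p * sden Lt f js Z1 x"
          by (rule mult_mono) (use pb1 b1 p01 m1 mp in auto)
        finally have lo: "exp (f x) / mass f Z * exp (- Cb E f (j # js) Z) \<le> p * sden Lt f js Z1 x" .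
        have "p * sden Lt f js Z1 x \<le> (mass f Z1 / mass f Z * exp (2 * E)) * (exp (f x) / mass f Z1 * exp (Cb E f js Z1))"
          by (rule mult_mono) (use pb1 b1 p01 m1 mp in auto)
        also have "\<dots> = exp (f x) / mass f Z * exp (Cb E f (j # js) Z)"
          unfolding C1 using exp_combine[OF m1 mp, of "2 * E" "f x" "Cb E f js Z1"] by simp
        finally have up: "p * sden Lt f js Z1 x \<le> exp (f x) / mass f Z * exp (Cb E f (j # js) Z)" .
        show ?thesis using lo up b1 p01 unfolding sd s2 by simp
      next
        case False
        then have x2: "x \<in> rbox Z2" using xZ un by auto
        have s1: "sden Lt f js Z1 x = 0" by (rule sden_zero[OF v1 False])
        have b2: "0 < sden Lt f js Z2 x \<and> exp (f x) / mass f Z2 * exp (- Cb E f js Z2) \<le> sden Lt f js Z2 x \<and>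
           sden Lt f js Z2 x \<le> exp (f x) / mass f Z2 * exp (Cb E f js Z2)" using elim(2) x2 by blast
        have "exp (f x) / mass f Z * exp (- Cb E f (j # js) Z)
              = (mass f Z2 / mass f Z * exp (- (2 * E))) * (exp (f x) / mass f Z2 * exp (- Cb E f js Z2))"
          unfolding C2 using exp_combine[OF m2 mp, of "- (2 * E)" "f x" "- Cb E f js Z2"] by simp
        also have "\<dots> \<le> (1 - p) * sden Lt f js Z2 x"
          by (rule mult_mono) (use pb2 b2 p01 m2 mp in auto)
        finally have lo: "exp (f x) / mass f Z * exp (- Cb E f (j # js) Z) \<le> (1 - p) * sden Lt f js Z2 x" .
        have "(1 - p) * sden Lt f js Z2 x \<le> (mass f Z2 / mass f Z * exp (2 * E)) * (exp (f x) / mass f Z2 * exp (Cb E f js Z2))"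
          by (rule mult_mono) (use pb2 b2 p01 m2 mp in auto)
        also have "\<dots> = exp (f x) / mass f Z * exp (Cb E f (j # js) Z)"
          unfolding C2 using exp_combine[OF m2 mp, of "2 * E" "f x" "Cb E f js Z2"] by simp
        finally have up: "(1 - p) * sden Lt f js Z2 x \<le> exp (f x) / mass f Z * exp (Cb E f (j # js) Z)" .
        show ?thesis using lo up b2 p01 unfolding sd s1 by simp
      qed
    qed
  qed
qed



lemma subprob_uniform_rbox: "subprob_space (uniform_measure lborel (rbox Z))"
proof (rule subprob_spaceI)
  have fin: "emeasure lborel (rbox Z) < \<infinity>"
    using emeasure_lborel_cbox_finite by (simp add: rbox_def)
  have "emeasure (uniform_measure lborel (rbox Z)) (space (uniform_measure lborel (rbox Z)))
        = emeasure lborel (rbox Z) / emeasure lborel (rbox Z)"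
    using emeasure_uniform_measure[OF rbox_sets, of UNIV Z] by simp
  also have "\<dots> \<le> 1"
  proof (cases "emeasure lborel (rbox Z) = 0")
    case True then show ?thesis by simp
  next
    case False then show ?thesis using fin by simp
  qed
  finally show "emeasure (uniform_measure lborel (rbox Z)) (space (uniform_measure lborel (rbox Z))) \<le> 1" .
  show "space (uniform_measure lborel (rbox Z)) \<noteq> {}" by simp
qed

lemma count_upt: "k < d \<Longrightarrow> count_list [0..<d] k = 1"
proof (induction d)
  case 0 then show ?case by simp
next
  case (Suc d)
  then show ?case by (cases "k < d") auto
qed

lemma count_concat_replicate: "count_list (concat (replicate M xs)) i = M * count_list xs i"
  by (induction M) auto

lemma count_schedule:
  fixes ord :: "nat \<Rightarrow> 'n::finite"
  assumes bij: "bij_betw ord {..<CARD('n)} UNIV"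
  shows "count_list (bisect_schedule ord M) i = M"
proof -
  have "i \<in> ord ` {..<CARD('n)}" using bij unfolding bij_betw_def by simp
  then obtain k where k: "k < CARD('n)" "ord k = i" by auto
  have inj: "inj_on ord (set [0..<CARD('n)])" using bij unfolding bij_betw_def by (simp add: atLeast0LessThan)
  have "count_list (map ord [0..<CARD('n)]) i = count_list [0..<CARD('n)] k"
    using count_list_inj_map[OF inj, of k] k by simp
  also have "\<dots> = 1" using count_upt k by simp
  finally show ?thesis by (simp add: bisect_schedule_def count_concat_replicate)
qed

lemma length_schedule: "length (bisect_schedule (ord :: nat \<Rightarrow> 'n::finite) M) = M * CARD('n)"
  by (simp add: bisect_schedule_def length_concat sum_list_replicate)



theorem theorem14:
  fixes m :: nat and B E :: real and M :: nat
    and f :: "real^'n \<Rightarrow> real"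
    and Lt :: "(real^'n \<Rightarrow> real) \<Rightarrow> real"
    and ord :: "nat \<Rightarrow> 'n"
  assumes "m \<ge> 1" and "B \<ge> 0"
    and "f \<in> Fclass m B"
    and "E \<ge> 0"
    and "\<forall>g \<in> Fclass m B. \<bar>Lt g - Lfun g\<bar> \<le> E"
    and "bij_betw ord {..<CARD('n)} UNIV"
  shows "D_suplog (bisect_sampler Lt ord M f) (Pdist f)
           \<le> ereal (2 * real M * real CARD('n) * E
                    + 2 powr (- real M) * real CARD('n) * Cnorm 1 f)"
proof -
  note f = assms(3) and m1 = assms(1) and Eb = assms(5) and bij = assms(6)
  have fC: "is_Cm m f" using f by (auto simp: Fclass_def)
  define Z0 :: "(real^'n) \<times> (real^'n)" where "Z0 = (0, \<chi> i. 1)"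
  define sched where "sched = bisect_schedule ord M"
  define s where "s = sden Lt f sched Z0"
  define C where "C = Cb E f sched Z0"
  define Q where "Q = bisect_sampler Lt ord M f"
  have v0: "valid Z0" by (simp add: valid_def Z0_def)
  have rb0: "rbox Z0 = ucube" by (auto simp: rbox_def Z0_def ucube_def mem_box_cart)
  have mass0: "mass f Z0 = Zfun f" by (simp add: mass_def Zfun_def rb0)
  have Zp: "0 < Zfun f" using mass_pos[OF v0 fC m1] mass0 by simp
  have s_meas[measurable]: "s \<in> borel_measurable lborel" unfolding s_def by (rule sden_meas)
  have s_nn: "0 \<le> s x" for x unfolding s_def by (rule sden_nonneg[OF v0])
  have s_out: "x \<notin> ucube \<Longrightarrow> s x = 0" for x unfolding s_def by (rule sden_zero[OF v0]) (simp add: rb0)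
  have K: "(\<lambda>Z. uniform_measure lborel (cbox (fst Z) (fst Z + snd Z))) = (\<lambda>Z. uniform_measure lborel (rbox Z))"
    by (simp add: rbox_def)
  have Kmeas: "(\<lambda>Z. uniform_measure lborel (rbox Z)) \<in> measurable (measure_pmf R) (subprob_algebra lborel)" for R
    by (auto simp: space_subprob_algebra subprob_uniform_rbox)
  have Qeq: "Q = bind (measure_pmf (bisect_run Lt f sched Z0)) (\<lambda>Z. uniform_measure lborel (rbox Z))"
    unfolding Q_def bisect_sampler_def K sched_def Z0_def ..
  have samp: "Q = density lborel (\<lambda>x. ennreal (s x))"
  proof (rule measure_eqI)
    show sQ: "sets Q = sets (density lborel (\<lambda>x. ennreal (s x)))"
      unfolding Qeq by (subst sets_bind) auto
    fix A assume "A \<in> sets Q"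
    then have A: "A \<in> sets lborel" using sQ by simp
    have sm: "(\<lambda>x. ennreal (s x)) \<in> borel_measurable lborel" by measurable
    have "emeasure Q A = (\<integral>\<^sup>+x\<in>A. ennreal (s x) \<partial>lborel)"
      unfolding Qeq
      by (subst emeasure_bind[OF _ Kmeas A]) (simp_all add: run_emeasure[OF v0 A] s_def)
    also have "\<dots> = emeasure (density lborel (\<lambda>x. ennreal (s x))) A"
      by (rule emeasure_density[OF sm A, symmetric])
    finally show "emeasure Q A = emeasure (density lborel (\<lambda>x. ennreal (s x))) A" .
  qed
  define q where "q = (\<lambda>x. indicator ucube x * exp (f x) / Zfun f)"
  have Pd: "Pdist f = density lborel (\<lambda>x. ennreal (q x))" by (simp add: Pdist_def q_def)
  have ucube_sets: "ucube \<in> sets borel" by (simp add: ucube_cbox)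
  have contE: "continuous_on ucube (\<lambda>x. exp (f x))" using f_cont[OF fC] by (intro continuous_intros)
  have qI: "q = (\<lambda>x. (indicator ucube x *\<^sub>R exp (f x)) / Zfun f)" by (simp add: q_def fun_eq_iff)
  have q1[measurable]: "(\<lambda>x. indicator ucube x *\<^sub>R exp (f x)) \<in> borel_measurable borel"
    by (rule borel_measurable_continuous_on_indicator[OF ucube_sets contE])
  have q_meas[measurable]: "q \<in> borel_measurable lborel" unfolding qI by measurable
  have q_pos: "x \<in> ucube \<Longrightarrow> 0 < q x" for x using Zp by (simp add: q_def)
  have q_out: "x \<notin> ucube \<Longrightarrow> q x = 0" for x by (simp add: q_def)
  have q_nn: "0 \<le> q x" for x using q_pos q_out by (cases "x \<in> ucube") (auto intro: less_imp_le)
  have AEb: "AE x in lborel. x \<in> ucube \<longrightarrow> 0 < s x \<and> q x * exp (- C) \<le> s x \<and> s x \<le> q x * exp C"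
    using sden_bound[OF f m1 Eb v0, of sched]
    by (eventually_elim) (auto simp: rb0 mass0 s_def C_def q_def)
  define g where "g = (\<lambda>x. s x / q x)"
  have g_meas[measurable]: "g \<in> borel_measurable lborel" unfolding g_def by measurable
  have g_nn: "0 \<le> g x" for x using s_nn q_nn by (simp add: g_def)
  have dens: "density (Pdist f) (\<lambda>x. ennreal (g x)) = Q"
  proof -
    have "density (Pdist f) (\<lambda>x. ennreal (g x)) = density lborel (\<lambda>x. ennreal (q x) * ennreal (g x))"
      unfolding Pd by (rule density_density_eq) auto
    also have "(\<lambda>x. ennreal (q x) * ennreal (g x)) = (\<lambda>x. ennreal (s x))"
    proof
      fix x show "ennreal (q x) * ennreal (g x) = ennreal (s x)"
      proof (cases "x \<in> ucube")
        case True
        then have "q x * g x = s x" using q_pos[OF True] by (simp add: g_def)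
        then show ?thesis using q_nn g_nn by (metis ennreal_mult)
      next
        case False then show ?thesis by (simp add: q_out s_out)
      qed
    qed
    finally show ?thesis using samp by simp
  qed
  have int_q: "integrable lborel q"
    unfolding qI by (intro integrable_divide_zero borel_integrable_compact contE) (simp add: ucube_cbox)
  have finP: "finite_measure (Pdist f)"
  proof (rule finite_measureI)
    have "emeasure (Pdist f) (space (Pdist f)) = (\<integral>\<^sup>+x. ennreal (q x) \<partial>lborel)"
      unfolding Pd by (simp add: emeasure_density)
    also have "\<dots> = ennreal (integral\<^sup>L lborel q)"
      by (rule nn_integral_eq_integral[OF int_q]) (simp add: q_nn)
    finally show "emeasure (Pdist f) (space (Pdist f)) \<noteq> \<infinity>" by simp
  qed
  interpret P: finite_measure "Pdist f" by (rule finP)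
  have RN: "AE x in Pdist f. ennreal (g x) = RN_deriv (Pdist f) Q x"
    by (rule P.RN_deriv_unique[OF _ dens]) (simp add: Pd)
  have AEg: "AE x in Pdist f. \<bar>ln (g x)\<bar> \<le> C"
    unfolding Pd
  proof (subst AE_density)
    show "(\<lambda>x. ennreal (q x)) \<in> borel_measurable lborel" by measurable
    show "AE x in lborel. 0 < ennreal (q x) \<longrightarrow> \<bar>ln (g x)\<bar> \<le> C"
      using AEb
    proof eventually_elim
      case (elim x)
      show ?case
      proof
        assume "0 < ennreal (q x)"
        then have qp: "0 < q x" by simp
        then have xu: "x \<in> ucube" using q_out by (cases "x \<in> ucube") auto
        have b: "0 < s x" "q x * exp (- C) \<le> s x" "s x \<le> q x * exp C" using elim xu by auto
        have g1: "exp (- C) \<le> g x" using b qp by (simp add: g_def pos_le_divide_eq mult.commute)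
        have g2: "g x \<le> exp C" using b qp by (simp add: g_def pos_divide_le_eq mult.commute)
        have gp: "0 < g x" using b qp by (simp add: g_def)
        have "ln (exp (- C)) \<le> ln (g x)" using g1 gp by (subst ln_le_cancel_iff) auto
        moreover have "ln (g x) \<le> ln (exp C)" using g2 gp by (subst ln_le_cancel_iff) auto
        ultimately show "\<bar>ln (g x)\<bar> \<le> C" by simp
      qed
    qed
  qed
  have ess: "esssup (Pdist f) (\<lambda>x. ereal \<bar>ln (enn2real (RN_deriv (Pdist f) Q x))\<bar>) \<le> ereal C"
  proof (rule esssup_I)
    show "(\<lambda>x. ereal \<bar>ln (enn2real (RN_deriv (Pdist f) Q x))\<bar>) \<in> borel_measurable (Pdist f)"
      by measurable
    show "AE x in Pdist f. ereal \<bar>ln (enn2real (RN_deriv (Pdist f) Q x))\<bar> \<le> ereal C"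
      using RN AEg
    proof eventually_elim
      case (elim x)
      then have "enn2real (RN_deriv (Pdist f) Q x) = g x" using g_nn by (metis enn2real_ennreal)
      then show ?case using elim by simp
    qed
  qed
  have ac1: "absolutely_continuous (Pdist f) Q"
    unfolding absolutely_continuous_def
  proof
    fix A assume "A \<in> null_sets (Pdist f)"
    then have A: "A \<in> sets lborel" and nA: "AE x in lborel. x \<in> A \<longrightarrow> ennreal (q x) = 0"
      unfolding Pd by (simp_all add: null_sets_density_iff)
    have "AE x in lborel. x \<in> A \<longrightarrow> ennreal (s x) = 0"
      using nA
    proof eventually_elim
      case (elim x)
      show ?case
      proof
        assume "x \<in> A"
        then have "q x \<le> 0" using elim ennreal_eq_0_iff by auto
        then have "x \<notin> ucube" using q_pos by force
        then show "ennreal (s x) = 0" by (simp add: s_out)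
      qed
    qed
    with A show "A \<in> null_sets Q" unfolding samp by (simp add: null_sets_density_iff)
  qed
  have ac2: "absolutely_continuous Q (Pdist f)"
    unfolding absolutely_continuous_def
  proof
    fix A assume "A \<in> null_sets Q"
    then have A: "A \<in> sets lborel" and nA: "AE x in lborel. x \<in> A \<longrightarrow> ennreal (s x) = 0"
      unfolding samp by (simp_all add: null_sets_density_iff)
    have "AE x in lborel. x \<in> A \<longrightarrow> ennreal (q x) = 0"
      using nA AEb
    proof eventually_elim
      case (elim x)
      show ?case
      proof
        assume xA: "x \<in> A"
        then have "s x \<le> 0" using elim ennreal_eq_0_iff by auto
        then have "x \<notin> ucube" using elim by force
        then show "ennreal (q x) = 0" by (simp add: q_out)
      qed
    qed
    with A show "A \<in> null_sets (Pdist f)" unfolding Pd by (simp add: null_sets_density_iff)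
  qed
  have Ceq: "C = 2 * real M * real CARD('n) * E + 2 powr (- real M) * real CARD('n) * Cnorm 1 f"
  proof -
    have "(\<Sum>i\<in>UNIV. snd Z0 $ i / 2 ^ count_list sched i) = real CARD('n) / 2 ^ M"
      by (simp add: Z0_def sched_def count_schedule[OF bij])
    also have "\<dots> = 2 powr (- real M) * real CARD('n)"
      by (simp add: powr_minus powr_realpow divide_inverse)
    finally show ?thesis
      by (simp add: C_def Cb_def sched_def length_schedule)
  qed
  show ?thesis
    using ac1 ac2 ess unfolding D_suplog_def Q_def[symmetric] Ceq by simp
qed


end
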